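(* Let $G$ be a finite group, $p$ a prime, and $B_0$ the principal $p$-block of $G$. Let $\chi, \psi \in \mathrm{Irr}(B_0)$ with $p \nmid \chi(1)$ and suppose that the product $\chi\psi$ is irreducible. Then $\chi\psi \in \mathrm{Irr}(B_0)$. *)

theory Defs
  imports "HOL-Algebra.Group" "Jordan_Normal_Form.Matrix" "HOL-Computational_Algebra.Polynomial"
begin

definition is_rep :: "('a, 'b) monoid_scheme \<Rightarrow> nat \<Rightarrow> ('a \<Rightarrow> complex mat) \<Rightarrow> bool" where
  "is_rep G n \<rho> \<longleftrightarrow>
     (\<forall>g\<in>carrier G. \<rho> g \<in> carrier_mat n n) \<and>
     \<rho> \<one>\<^bsub>G\<^esub> = 1\<^sub>m n \<and>
     (\<forall>g\<in>carrier G. \<forall>h\<in>carrier G. \<rho> (g \<otimes>\<^bsub>G\<^esub> h) = \<rho> g * \<rho> h)"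

definition invariant_subspace :: "('a, 'b) monoid_scheme \<Rightarrow> nat \<Rightarrow> ('a \<Rightarrow> complex mat) \<Rightarrow> complex vec set \<Rightarrow> bool" where
  "invariant_subspace G n \<rho> W \<longleftrightarrow>
     W \<subseteq> carrier_vec n \<and> 0\<^sub>v n \<in> W \<and>
     (\<forall>v\<in>W. \<forall>w\<in>W. v + w \<in> W) \<and>
     (\<forall>c. \<forall>v\<in>W. c \<cdot>\<^sub>v v \<in> W) \<and>
     (\<forall>g\<in>carrier G. \<forall>w\<in>W. \<rho> g *\<^sub>v w \<in> W)"

definition irreducible_rep :: "('a, 'b) monoid_scheme \<Rightarrow> nat \<Rightarrow> ('a \<Rightarrow> complex mat) \<Rightarrow> bool" where
  "irreducible_rep G n \<rho> \<longleftrightarrow> n > 0 \<and> is_rep G n \<rho> \<and>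
     (\<forall>W. invariant_subspace G n \<rho> W \<longrightarrow> W = {0\<^sub>v n} \<or> W = carrier_vec n)"

definition mat_trace :: "complex mat \<Rightarrow> complex" where
  "mat_trace A = (\<Sum>i<dim_row A. A $$ (i, i))"

definition irr_char :: "('a, 'b) monoid_scheme \<Rightarrow> ('a \<Rightarrow> complex) \<Rightarrow> bool" where
  "irr_char G \<chi> \<longleftrightarrow> (\<exists>n \<rho>. irreducible_rep G n \<rho> \<and>
      (\<forall>g\<in>carrier G. \<chi> g = mat_trace (\<rho> g)) \<and> (\<forall>g. g \<notin> carrier G \<longrightarrow> \<chi> g = 0))"

definition conj_class :: "('a, 'b) monoid_scheme \<Rightarrow> 'a \<Rightarrow> 'a set" where
  "conj_class G g = {x \<otimes>\<^bsub>G\<^esub> g \<otimes>\<^bsub>G\<^esub> inv\<^bsub>G\<^esub> x | x. x \<in> carrier G}"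

definition alg_int_ideal :: "complex set \<Rightarrow> bool" where
  "alg_int_ideal I \<longleftrightarrow> I \<subseteq> {z. algebraic_int z} \<and> 0 \<in> I \<and>
     (\<forall>x\<in>I. \<forall>y\<in>I. x + y \<in> I) \<and> (\<forall>x\<in>I. - x \<in> I) \<and>
     (\<forall>r. algebraic_int r \<longrightarrow> (\<forall>x\<in>I. r * x \<in> I))"

definition max_ideal_over :: "nat \<Rightarrow> complex set \<Rightarrow> bool" where
  "max_ideal_over p P \<longleftrightarrow> alg_int_ideal P \<and> of_nat p \<in> P \<and> 1 \<notin> P \<and>
     (\<forall>J. alg_int_ideal J \<and> P \<subseteq> J \<longrightarrow> J = P \<or> 1 \<in> J)"

text \<open>Principal p-block (w.r.t. the maximal ideal P): the central character
  omega_chi(K^+) = |K| chi(g)/chi(1) is congruent mod P to omega_1(K^+) = |K|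
  for every conjugacy class K = class of g.\<close>
definition in_principal_block :: "('a, 'b) monoid_scheme \<Rightarrow> complex set \<Rightarrow> ('a \<Rightarrow> complex) \<Rightarrow> bool" where
  "in_principal_block G P \<chi> \<longleftrightarrow> irr_char G \<chi> \<and>
     (\<forall>g\<in>carrier G. of_nat (card (conj_class G g)) * \<chi> g / \<chi> \<one>\<^bsub>G\<^esub>
                      - of_nat (card (conj_class G g)) \<in> P)"

end

theory Submission
  imports Defs "Jordan_Normal_Form.Schur_Decomposition" "HOL-Algebra.Multiplicative_Group"
begin

lemma eig_alg_int:
  fixes I :: "'i set" and M :: "'i \<Rightarrow> 'i \<Rightarrow> int" and w :: "'i \<Rightarrow> complex"
  assumes fin: "finite I" and i0: "i0 \<in> I" "w i0 \<noteq> 0"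
    and eq: "\<And>i. i \<in> I \<Longrightarrow> (\<Sum>j\<in>I. of_int (M i j) * w j) = x * w i"
  shows "algebraic_int x"
proof -
  define n where "n = card I"
  obtain f where f: "bij_betw f {0..<n} I" using ex_bij_betw_nat_finite[OF fin] n_def by blast
  define A :: "int mat" where "A = mat n n (\<lambda>(i,j). M (f i) (f j))"
  define Ac :: "complex mat" where "Ac = map_mat of_int A"
  define v where "v = vec n (\<lambda>i. w (f i))"
  have A: "A \<in> carrier_mat n n" unfolding A_def by simp
  have Ac: "Ac \<in> carrier_mat n n" unfolding Ac_def using A by simp
  obtain k where k: "k < n" "f k = i0" using f i0 unfolding bij_betw_def by auto
  have v: "v \<in> carrier_vec n" unfolding v_def by simp
  have v0: "v \<noteq> 0\<^sub>v n" proof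
    assume "v = 0\<^sub>v n" hence "v $ k = 0" using k by simp
    thus False using k i0 unfolding v_def by simp
  qed
  have "Ac *\<^sub>v v = x \<cdot>\<^sub>v v"
  proof (rule eq_vecI)
    fix i assume i: "i < dim_vec (x \<cdot>\<^sub>v v)"
    hence i: "i < n" using v by simp
    have "(Ac *\<^sub>v v) $ i = (\<Sum>j<n. of_int (M (f i) (f j)) * w (f j))"
      using i Ac unfolding Ac_def A_def v_def
      by (auto simp add: mult_mat_vec_def scalar_prod_def lessThan_atLeast0 intro!: sum.cong)
    also have "\<dots> = (\<Sum>j\<in>I. of_int (M (f i) j) * w j)"
      using sum.reindex_bij_betw[OF f, of "\<lambda>j. of_int (M (f i) j) * w j"]
      by (simp add: lessThan_atLeast0)
    also have "\<dots> = x * w (f i)" using eq[of "f i"] i f unfolding bij_betw_def by auto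
    finally show "(Ac *\<^sub>v v) $ i = (x \<cdot>\<^sub>v v) $ i" using i v unfolding v_def by simp
  qed (use Ac v in simp)
  hence "eigenvector Ac v x" unfolding eigenvector_def using v v0 Ac by simp
  hence "eigenvalue Ac x" unfolding eigenvalue_def by blast
  hence "poly (char_poly Ac) x = 0" using eigenvalue_root_char_poly[OF Ac] by simp
  moreover have "char_poly Ac = map_poly of_int (char_poly A)"
    unfolding Ac_def by (rule of_int_hom.char_poly_hom[OF A])
  moreover have "lead_coeff (char_poly A) = 1" using degree_monic_char_poly[OF A] by simp
  ultimately show ?thesis unfolding algebraic_int_altdef_ipoly by metis
qed


lemma alg_int_eig:
  assumes "algebraic_int (x::complex)"
  shows "\<exists>(I::nat set) M w. finite I \<and> (\<exists>i0\<in>I. w i0 \<noteq> 0) \<and>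
           (\<forall>i\<in>I. (\<Sum>j\<in>I. of_int (M i j) * w j) = x * w i)"
proof -
  obtain q :: "int poly" where q: "poly (map_poly of_int q) x = 0" "lead_coeff q = 1"
    using assms unfolding algebraic_int_altdef_ipoly by blast
  define d where "d = degree q"
  have d: "d > 0"
  proof (rule ccontr)
    assume "\<not> d > 0" hence "degree q = 0" unfolding d_def by simp
    hence "q = [:1:]" using q(2) by (metis leading_coeff_0_iff pCons_0_0 degree_0_id one_pCons zero_neq_one)
    thus False using q(1) by simp
  qed
  define M :: "nat \<Rightarrow> nat \<Rightarrow> int" where
    "M = (\<lambda>i j. if Suc i < d then (if j = Suc i then 1 else 0) else - Polynomial.coeff q j)"
  define w where "w = (\<lambda>i::nat. x ^ i)"
  have "\<forall>i\<in>{..<d}. (\<Sum>j\<in>{..<d}. of_int (M i j) * w j) = x * w i"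
  proof
    fix i assume i: "i \<in> {..<d}"
    show "(\<Sum>j\<in>{..<d}. of_int (M i j) * w j) = x * w i"
    proof (cases "Suc i < d")
      case True
      hence "(\<Sum>j\<in>{..<d}. of_int (M i j) * w j) = (\<Sum>j\<in>{..<d}. if j = Suc i then w j else 0)"
        unfolding M_def by (intro sum.cong) auto
      also have "\<dots> = w (Suc i)" using True by simp
      finally show ?thesis unfolding w_def by simp
    next
      case False
      hence si: "Suc i = d" using i by auto
      have "0 = poly (map_poly of_int q) x" using q by simp
      also have "\<dots> = (\<Sum>j\<le>d. of_int (Polynomial.coeff q j) * x ^ j)"
        unfolding poly_altdef d_def by (simp add: degree_map_poly coeff_map_poly)
      also have "\<dots> = (\<Sum>j<d. of_int (Polynomial.coeff q j) * x ^ j) + x ^ d"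
        using q(2) unfolding d_def by (simp add: lessThan_Suc_atMost[symmetric])
      finally have "x ^ d = - (\<Sum>j<d. of_int (Polynomial.coeff q j) * x ^ j)" by (simp add: eq_neg_iff_add_eq_0 add.commute)
      moreover have "(\<Sum>j\<in>{..<d}. of_int (M i j) * w j) = - (\<Sum>j<d. of_int (Polynomial.coeff q j) * x ^ j)"
        using False unfolding M_def w_def by (simp add: sum_negf)
      ultimately show ?thesis using si unfolding w_def by (metis power_Suc)
    qed
  qed
  moreover have "w 0 \<noteq> 0" "0 \<in> {..<d}" using d unfolding w_def by auto
  ultimately show ?thesis by (intro exI[of _ "{..<d}"] exI[of _ M] exI[of _ w]) blast
qed

lemma algebraic_int_add:
  assumes "algebraic_int (x::complex)" "algebraic_int y"
  shows "algebraic_int (x + y)"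
proof -
  obtain I1 :: "nat set" and M1 w1 i1 where 1: "finite I1" "i1 \<in> I1" "w1 i1 \<noteq> 0"
    "\<And>i. i\<in>I1 \<Longrightarrow> (\<Sum>j\<in>I1. of_int (M1 i j) * w1 j) = x * w1 i"
    using alg_int_eig[OF assms(1)] by blast
  obtain I2 :: "nat set" and M2 w2 i2 where 2: "finite I2" "i2 \<in> I2" "w2 i2 \<noteq> 0"
    "\<And>i. i\<in>I2 \<Longrightarrow> (\<Sum>j\<in>I2. of_int (M2 i j) * w2 j) = y * w2 i"
    using alg_int_eig[OF assms(2)] by blast
  define M where "M = (\<lambda>(i::nat,j::nat) (i'::nat,j'::nat).
      (if j = j' then M1 i i' else 0) + (if i = i' then M2 j j' else 0))"
  define w where "w = (\<lambda>(i::nat,j::nat). w1 i * w2 j)"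
  show ?thesis
  proof (rule eig_alg_int[of "I1 \<times> I2" "(i1,i2)" w M])
    show "finite (I1 \<times> I2)" using 1 2 by simp
    show "(i1,i2) \<in> I1 \<times> I2" using 1 2 by simp
    show "w (i1,i2) \<noteq> 0" using 1 2 unfolding w_def by simp
    fix ij assume ij: "ij \<in> I1 \<times> I2"
    obtain i j where ijd: "ij = (i,j)" "i \<in> I1" "j \<in> I2" using ij by auto
    have s1: "(\<Sum>k\<in>I1. \<Sum>l\<in>I2. (if j = l then of_int (M1 i k) * (w1 k * w2 l) else 0))
        = (\<Sum>k\<in>I1. of_int (M1 i k) * w1 k) * w2 j"
      using ijd 2 by (simp add: sum.delta sum_distrib_right mult.assoc)
    have "(\<Sum>k\<in>I1. \<Sum>l\<in>I2. (if i = k then of_int (M2 j l) * (w1 k * w2 l) else 0))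
        = (\<Sum>k\<in>I1. (if i = k then (\<Sum>l\<in>I2. of_int (M2 j l) * (w1 k * w2 l)) else 0))"
      by (intro sum.cong) auto
    also have "\<dots> = w1 i * (\<Sum>l\<in>I2. of_int (M2 j l) * w2 l)"
      using ijd 1 by (simp add: sum.delta sum_distrib_left mult.left_commute)
    finally have s2: "(\<Sum>k\<in>I1. \<Sum>l\<in>I2. (if i = k then of_int (M2 j l) * (w1 k * w2 l) else 0))
        = w1 i * (\<Sum>l\<in>I2. of_int (M2 j l) * w2 l)" .
    have "(\<Sum>kl\<in>I1 \<times> I2. of_int (M ij kl) * w kl)
        = (\<Sum>k\<in>I1. \<Sum>l\<in>I2. (if j = l then of_int (M1 i k) * (w1 k * w2 l) else 0)
              + (if i = k then of_int (M2 j l) * (w1 k * w2 l) else 0))"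
      unfolding sum.cartesian_product M_def w_def ijd
      by (intro sum.cong) (auto simp: distrib_right)
    also have "\<dots> = (\<Sum>k\<in>I1. \<Sum>l\<in>I2. (if j = l then of_int (M1 i k) * (w1 k * w2 l) else 0))
              + (\<Sum>k\<in>I1. \<Sum>l\<in>I2. (if i = k then of_int (M2 j l) * (w1 k * w2 l) else 0))"
      by (simp add: sum.distrib)
    also have "\<dots> = (\<Sum>k\<in>I1. of_int (M1 i k) * w1 k) * w2 j
              + w1 i * (\<Sum>l\<in>I2. of_int (M2 j l) * w2 l)"
      unfolding s1 s2 ..
    also have "\<dots> = (x + y) * w ij" using 1(4)[OF ijd(2)] 2(4)[OF ijd(3)] ijd
      unfolding w_def by (simp add: algebra_simps)
    finally show "(\<Sum>kl\<in>I1 \<times> I2. of_int (M ij kl) * w kl) = (x + y) * w ij" .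
  qed
qed

lemma algebraic_int_sum_list:
  "\<forall>x\<in>set xs. algebraic_int (x::complex) \<Longrightarrow> algebraic_int (sum_list xs)"
  by (induction xs) (auto intro: algebraic_int_add)


lemma mat_trace_mult_comm:
  assumes A: "A \<in> carrier_mat n m" and B: "B \<in> carrier_mat m n"
  shows "mat_trace (A * B) = mat_trace (B * A)"
proof -
  have "mat_trace (A * B) = (\<Sum>i<n. \<Sum>k<m. A $$ (i,k) * B $$ (k,i))"
    unfolding mat_trace_def using A B
    by (auto simp: scalar_prod_def lessThan_atLeast0 intro!: sum.cong)
  also have "\<dots> = (\<Sum>k<m. \<Sum>i<n. B $$ (k,i) * A $$ (i,k))"
    by (subst sum.swap) (simp add: mult.commute)
  also have "\<dots> = mat_trace (B * A)"
    unfolding mat_trace_def using A B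
    by (auto simp: scalar_prod_def lessThan_atLeast0 intro!: sum.cong)
  finally show ?thesis .
qed

lemma mat_trace_similar:
  assumes "similar_mat_wit A B P Q"
  shows "mat_trace A = mat_trace B"
proof -
  define n where "n = dim_row A"
  have c: "A \<in> carrier_mat n n" "B \<in> carrier_mat n n" "P \<in> carrier_mat n n" "Q \<in> carrier_mat n n"
    and QP: "Q * P = 1\<^sub>m n" and AB: "A = P * B * Q"
    using similar_mat_witD[OF n_def assms] by auto
  have "mat_trace A = mat_trace (P * (B * Q))" using AB assoc_mult_mat[OF c(3,2,4)] by simp
  also have "\<dots> = mat_trace ((B * Q) * P)" using c by (intro mat_trace_mult_comm) auto
  also have "(B * Q) * P = B" using c QP assoc_mult_mat[OF c(2,4,3)] by simp
  finally show ?thesis .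
qed

lemma mat_trace_diag: "mat_trace B = sum_list (diag_mat B)"
  unfolding mat_trace_def diag_mat_def
  by (simp add: sum_list_sum_nth lessThan_atLeast0)

lemma trace_root_unity_alg_int:
  fixes A :: "complex mat"
  assumes A: "A \<in> carrier_mat n n" and m: "m > 0" and Am: "A ^\<^sub>m m = 1\<^sub>m n"
  shows "algebraic_int (mat_trace A)"
proof -
  obtain es where es: "char_poly A = (\<Prod>a\<leftarrow>es. [:- a, 1:])"
    using char_poly_factorized[OF A] by blast
  obtain B P Q where BPQ: "schur_decomposition A es = (B,P,Q)" by (cases "schur_decomposition A es") auto
  from schur_decomposition[OF A es BPQ]
  have sim: "similar_mat_wit A B P Q" and diag: "diag_mat B = es" by auto
  have tr: "mat_trace A = sum_list es" using mat_trace_similar[OF sim] mat_trace_diag diag by simp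
  have "algebraic_int e" if e: "e \<in> set es" for e
  proof -
    have "poly (char_poly A) e = 0" unfolding es using e
      using e by (force simp: poly_prod_list prod_list_zero_iff)
    hence "eigenvalue A e" using eigenvalue_root_char_poly[OF A] by simp
    then obtain v where ev: "eigenvector A v e" unfolding eigenvalue_def by blast
    have v: "v \<in> carrier_vec n" "v \<noteq> 0\<^sub>v n" using ev A unfolding eigenvector_def by auto
    have "v = e ^ m \<cdot>\<^sub>v v" using eigenvector_pow[OF A ev, of m] Am v by simp
    hence "e ^ m = 1"
    proof -
      assume h: "v = e ^ m \<cdot>\<^sub>v v"
      have "\<exists>i<n. v $ i \<noteq> 0"
      proof (rule ccontr)
        assume "\<not> ?thesis"
        hence "v = 0\<^sub>v n" using v(1) by (intro eq_vecI) auto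
        thus False using v(2) by simp
      qed
      then obtain i where i: "i < n" "v $ i \<noteq> 0" by blast
      have "v $ i = e ^ m * v $ i" using arg_cong[OF h, of "\<lambda>u. u $ i"] i v by simp
      thus ?thesis using i by simp
    qed
    show ?thesis
      by (rule algebraic_int_root[of 1 "Polynomial.monom 1 m"]) (use m \<open>e ^ m = 1\<close> in \<open>auto simp: poly_monom degree_monom_eq coeff_monom\<close>)
  qed
  thus ?thesis unfolding tr by (intro algebraic_int_sum_list) auto
qed


context group begin

lemma rep_carrier: "is_rep G n \<rho> \<Longrightarrow> g \<in> carrier G \<Longrightarrow> \<rho> g \<in> carrier_mat n n"
  unfolding is_rep_def by blast

lemma rep_mult: "is_rep G n \<rho> \<Longrightarrow> g \<in> carrier G \<Longrightarrow> h \<in> carrier G \<Longrightarrow> \<rho> (g \<otimes> h) = \<rho> g * \<rho> h"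
  unfolding is_rep_def by blast

lemma rep_one: "is_rep G n \<rho> \<Longrightarrow> \<rho> \<one> = 1\<^sub>m n"
  unfolding is_rep_def by blast

lemma rep_pow:
  assumes r: "is_rep G n \<rho>" and g: "g \<in> carrier G"
  shows "\<rho> (g [^] (k::nat)) = \<rho> g ^\<^sub>m k"
proof (induction k)
  case 0 thus ?case using rep_one[OF r] rep_carrier[OF r g] by simp
next
  case (Suc k) thus ?case using rep_mult[OF r _ g, of "g [^] k"] g by simp
qed

lemma rep_inv_l:
  assumes r: "is_rep G n \<rho>" and g: "g \<in> carrier G"
  shows "\<rho> (inv g) * \<rho> g = 1\<^sub>m n"
  using rep_mult[OF r inv_closed[OF g] g] rep_one[OF r] g by simp

lemma rep_inv_r:
  assumes r: "is_rep G n \<rho>" and g: "g \<in> carrier G"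
  shows "\<rho> g * \<rho> (inv g) = 1\<^sub>m n"
  using rep_mult[OF r g inv_closed[OF g]] rep_one[OF r] g by simp

lemma rep_trace_alg_int:
  assumes r: "is_rep G n \<rho>" and g: "g \<in> carrier G" and fin: "finite (carrier G)"
  shows "algebraic_int (mat_trace (\<rho> g))"
proof (rule trace_root_unity_alg_int[OF rep_carrier[OF r g]])
  show "order G > 0" using fin unfolding order_def by (simp add: card_gt_0_iff) (use one_closed in blast)
  show "\<rho> g ^\<^sub>m order G = 1\<^sub>m n"
    using rep_pow[OF r g, of "order G"] pow_order_eq_1[OF g] rep_one[OF r] by simp
qed

lemma rep_trace_conj:
  assumes r: "is_rep G n \<rho>" and g: "g \<in> carrier G" and x: "x \<in> carrier G"
  shows "mat_trace (\<rho> (x \<otimes> g \<otimes> inv x)) = mat_trace (\<rho> g)"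
proof -
  have c: "\<rho> x \<in> carrier_mat n n" "\<rho> g \<in> carrier_mat n n" "\<rho> (inv x) \<in> carrier_mat n n"
    using rep_carrier[OF r] g x by auto
  have "\<rho> (x \<otimes> g \<otimes> inv x) = \<rho> x * (\<rho> g * \<rho> (inv x))"
    using rep_mult[OF r] g x assoc_mult_mat[OF c] by simp
  hence "mat_trace (\<rho> (x \<otimes> g \<otimes> inv x)) = mat_trace ((\<rho> g * \<rho> (inv x)) * \<rho> x)"
    using mat_trace_mult_comm[of "\<rho> x" n n "\<rho> g * \<rho> (inv x)"] c by simp
  also have "(\<rho> g * \<rho> (inv x)) * \<rho> x = \<rho> g"
    using assoc_mult_mat[OF c(2,3,1)] rep_inv_l[OF r x] c by simp
  finally show ?thesis .
qed

end


context group begin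

lemma conj_class_sub: "g \<in> carrier G \<Longrightarrow> conj_class G g \<subseteq> carrier G"
  unfolding conj_class_def by auto

lemma conj_class_self: "g \<in> carrier G \<Longrightarrow> g \<in> conj_class G g"
  unfolding conj_class_def by (auto intro!: exI[of _ \<one>])

lemma conj_class_conj:
  assumes g: "g \<in> carrier G" and h: "h \<in> carrier G" and x: "x \<in> conj_class G g"
  shows "h \<otimes> x \<otimes> inv h \<in> conj_class G g"
proof -
  obtain y where y: "y \<in> carrier G" "x = y \<otimes> g \<otimes> inv y" using x unfolding conj_class_def by auto
  have "h \<otimes> x \<otimes> inv h = (h \<otimes> y) \<otimes> g \<otimes> inv (h \<otimes> y)"
    using y g h by (simp add: m_assoc inv_mult_group)
  thus ?thesis using y h unfolding conj_class_def by blast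
qed

lemma conj_class_image:
  assumes g: "g \<in> carrier G" and h: "h \<in> carrier G"
  shows "(\<lambda>x. h \<otimes> x \<otimes> inv h) ` conj_class G g = conj_class G g"
proof
  show "(\<lambda>x. h \<otimes> x \<otimes> inv h) ` conj_class G g \<subseteq> conj_class G g"
    using conj_class_conj[OF g h] by auto
  show "conj_class G g \<subseteq> (\<lambda>x. h \<otimes> x \<otimes> inv h) ` conj_class G g"
  proof
    fix x assume x: "x \<in> conj_class G g"
    have xc: "x \<in> carrier G" using x conj_class_sub[OF g] by auto
    have "inv h \<otimes> x \<otimes> inv (inv h) \<in> conj_class G g" using conj_class_conj[OF g inv_closed[OF h] x] h by simp
    moreover have "x = h \<otimes> (inv h \<otimes> x \<otimes> inv (inv h)) \<otimes> inv h"
      using h xc by (simp add: m_assoc[symmetric], simp add: m_assoc)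
    ultimately show "x \<in> (\<lambda>x. h \<otimes> x \<otimes> inv h) ` conj_class G g" by blast
  qed
qed

lemma conj_class_inj:
  assumes h: "h \<in> carrier G" and S: "S \<subseteq> carrier G"
  shows "inj_on (\<lambda>x. h \<otimes> x \<otimes> inv h) S"
proof (rule inj_onI)
  fix x y assume xy: "x \<in> S" "y \<in> S" "h \<otimes> x \<otimes> inv h = h \<otimes> y \<otimes> inv h"
  hence c: "x \<in> carrier G" "y \<in> carrier G" using S by auto
  hence hh: "h \<otimes> x = h \<otimes> y" using xy(3) right_cancel[of "inv h" "h \<otimes> x" "h \<otimes> y"] h by simp
  have "x = inv h \<otimes> (h \<otimes> x)" using c h by (simp add: m_assoc[symmetric])
  also have "\<dots> = y" using hh c h by (simp add: m_assoc[symmetric])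
  finally show "x = y" .
qed

end


lemma mat_mult_entry:
  assumes "A \<in> carrier_mat n n" "B \<in> carrier_mat n n" "i < n" "j < n"
  shows "(A * B) $$ (i,j) = (\<Sum>l<n. A $$ (i,l) * B $$ (l,j))"
  using assms by (simp add: scalar_prod_def lessThan_atLeast0)

lemma mat_vec_unit:
  fixes A :: "complex mat"
  assumes "A \<in> carrier_mat n n" "i < n" "j < n"
  shows "(A *\<^sub>v unit_vec n j) $ i = A $$ (i,j)"
proof -
  have "(A *\<^sub>v unit_vec n j) $ i = (\<Sum>l\<in>{0..<n}. A $$ (i,l) * (if l = j then 1 else 0))"
    using assms by (auto simp: scalar_prod_def intro!: sum.cong)
  also have "\<dots> = A $$ (i,j)" using assms by (simp add: if_distrib sum.delta cong: if_cong)
  finally show ?thesis .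
qed

context group begin

lemma class_sum_scalar:
  assumes fin: "finite (carrier G)" and irr: "irreducible_rep G n \<rho>" and g: "g \<in> carrier G"
  shows "\<exists>e. \<forall>i<n. \<forall>j<n. (\<Sum>x\<in>conj_class G g. \<rho> x $$ (i,j)) = (if i = j then e else 0)"
proof -
  define K where "K = conj_class G g"
  have r: "is_rep G n \<rho>" and n: "n > 0" using irr unfolding irreducible_rep_def by auto
  have Kc: "K \<subseteq> carrier G" using conj_class_sub[OF g] unfolding K_def .
  have finK: "finite K" using finite_subset[OF Kc fin] .
  define S where "S = mat n n (\<lambda>(i,j). \<Sum>x\<in>K. \<rho> x $$ (i,j))"
  have S: "S \<in> carrier_mat n n" unfolding S_def by simp
  have rc: "\<And>x. x \<in> carrier G \<Longrightarrow> \<rho> x \<in> carrier_mat n n" using rep_carrier[OF r] .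
  have comm: "S * \<rho> h = \<rho> h * S" if h: "h \<in> carrier G" for h
  proof (rule eq_matI)
    fix i j assume ij: "i < dim_row (\<rho> h * S)" "j < dim_col (\<rho> h * S)"
    hence ij: "i < n" "j < n" using rc[OF h] S by auto
    have "(S * \<rho> h) $$ (i,j) = (\<Sum>l<n. (\<Sum>x\<in>K. \<rho> x $$ (i,l)) * \<rho> h $$ (l,j))"
      using mat_mult_entry[OF S rc[OF h] ij] ij unfolding S_def by simp
    also have "\<dots> = (\<Sum>x\<in>K. \<Sum>l<n. \<rho> x $$ (i,l) * \<rho> h $$ (l,j))"
      by (simp add: sum_distrib_right sum.swap[of _ K])
    also have "\<dots> = (\<Sum>x\<in>K. \<rho> (x \<otimes> h) $$ (i,j))"
      using Kc h ij by (intro sum.cong) (auto simp: rep_mult[OF r] mat_mult_entry[OF rc rc])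
    also have "\<dots> = (\<Sum>x\<in>(\<lambda>x. h \<otimes> x \<otimes> inv h) ` K. \<rho> (x \<otimes> h) $$ (i,j))"
      using conj_class_image[OF g h] unfolding K_def by simp
    also have "\<dots> = (\<Sum>x\<in>K. \<rho> (h \<otimes> x \<otimes> inv h \<otimes> h) $$ (i,j))"
      by (subst sum.reindex[OF conj_class_inj[OF h Kc]]) simp
    also have "\<dots> = (\<Sum>x\<in>K. \<rho> (h \<otimes> x) $$ (i,j))"
      using Kc h by (intro sum.cong) (auto simp: m_assoc)
    also have "\<dots> = (\<Sum>x\<in>K. \<Sum>l<n. \<rho> h $$ (i,l) * \<rho> x $$ (l,j))"
      using Kc h ij by (intro sum.cong) (auto simp: rep_mult[OF r] mat_mult_entry[OF rc rc])
    also have "\<dots> = (\<Sum>l<n. \<rho> h $$ (i,l) * (\<Sum>x\<in>K. \<rho> x $$ (l,j)))"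
      by (simp add: sum_distrib_left sum.swap[of _ K])
    also have "\<dots> = (\<rho> h * S) $$ (i,j)"
      using mat_mult_entry[OF rc[OF h] S ij] ij unfolding S_def by simp
    finally show "(S * \<rho> h) $$ (i,j) = (\<rho> h * S) $$ (i,j)" .
  qed (use S rc[OF that] in auto)
  obtain es where es: "char_poly S = (\<Prod>a\<leftarrow>es. [:- a, 1:])" "length es = n"
    using char_poly_factorized[OF S] by blast
  define e where "e = es ! 0"
  have "e \<in> set es" using es(2) n unfolding e_def by simp
  hence "poly (char_poly S) e = 0" unfolding es(1)
    by (force simp: poly_prod_list prod_list_zero_iff)
  hence "eigenvalue S e" using eigenvalue_root_char_poly[OF S] by simp
  then obtain v where ev: "eigenvector S v e" unfolding eigenvalue_def by blast
  have v: "v \<in> carrier_vec n" "v \<noteq> 0\<^sub>v n" "S *\<^sub>v v = e \<cdot>\<^sub>v v" using ev S unfolding eigenvector_def by auto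
  define W where "W = {u \<in> carrier_vec n. S *\<^sub>v u = e \<cdot>\<^sub>v u}"
  have "invariant_subspace G n \<rho> W"
    unfolding invariant_subspace_def
  proof (intro conjI ballI allI)
    show "W \<subseteq> carrier_vec n" unfolding W_def by auto
    show "0\<^sub>v n \<in> W" unfolding W_def using S by (auto intro!: eq_vecI simp: scalar_prod_def)
    fix u w assume "u \<in> W" "w \<in> W"
    thus "u + w \<in> W" unfolding W_def using S
      by (auto simp: mult_add_distrib_mat_vec smult_add_distrib_vec)
  next
    fix c u assume "u \<in> W"
    thus "c \<cdot>\<^sub>v u \<in> W" unfolding W_def using S
      by (auto simp: mult_mat_vec smult_smult_assoc mult.commute)
  next
    fix h u assume h: "h \<in> carrier G" and u: "u \<in> W"
    have uc: "u \<in> carrier_vec n" "S *\<^sub>v u = e \<cdot>\<^sub>v u" using u unfolding W_def by auto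
    have "S *\<^sub>v (\<rho> h *\<^sub>v u) = (S * \<rho> h) *\<^sub>v u" using S rc[OF h] uc by simp
    also have "\<dots> = (\<rho> h * S) *\<^sub>v u" using comm[OF h] by simp
    also have "\<dots> = \<rho> h *\<^sub>v (e \<cdot>\<^sub>v u)" using S rc[OF h] uc by simp
    also have "\<dots> = e \<cdot>\<^sub>v (\<rho> h *\<^sub>v u)" using rc[OF h] uc by (simp add: mult_mat_vec)
    finally show "\<rho> h *\<^sub>v u \<in> W" unfolding W_def using rc[OF h] uc by simp
  qed
  hence "W = {0\<^sub>v n} \<or> W = carrier_vec n" using irr unfolding irreducible_rep_def by blast
  moreover have "v \<in> W" using v unfolding W_def by simp
  ultimately have W: "W = carrier_vec n" using v by auto
  have "\<forall>i<n. \<forall>j<n. (\<Sum>x\<in>K. \<rho> x $$ (i,j)) = (if i = j then e else 0)"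
  proof (intro allI impI)
    fix i j assume ij: "i < n" "j < n"
    have "unit_vec n j \<in> W" using W by simp
    hence "S *\<^sub>v unit_vec n j = e \<cdot>\<^sub>v unit_vec n j" unfolding W_def by simp
    hence "(S *\<^sub>v unit_vec n j) $ i = (e \<cdot>\<^sub>v unit_vec n j) $ i" by simp
    thus "(\<Sum>x\<in>K. \<rho> x $$ (i,j)) = (if i = j then e else 0)"
      using mat_vec_unit[OF S ij] ij unfolding S_def by simp
  qed
  thus ?thesis unfolding K_def by blast
qed

end


context group begin

lemma central_char_alg_int:
  assumes fin: "finite (carrier G)" and irr: "irreducible_rep G n \<rho>" and g: "g \<in> carrier G"
  shows "algebraic_int (of_nat (card (conj_class G g)) * mat_trace (\<rho> g) / mat_trace (\<rho> \<one>))"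
proof -
  define K where "K = conj_class G g"
  obtain e where e: "\<And>i j. i < n \<Longrightarrow> j < n \<Longrightarrow> (\<Sum>x\<in>K. \<rho> x $$ (i,j)) = (if i = j then e else 0)"
    using class_sum_scalar[OF fin irr g] unfolding K_def by blast
  have r: "is_rep G n \<rho>" and n: "n > 0" using irr unfolding irreducible_rep_def by auto
  have Kc: "K \<subseteq> carrier G" using conj_class_sub[OF g] unfolding K_def .
  have finK: "finite K" using finite_subset[OF Kc fin] .
  have rc: "\<And>x. x \<in> carrier G \<Longrightarrow> \<rho> x \<in> carrier_mat n n" using rep_carrier[OF r] .
  have tr1: "mat_trace (\<rho> \<one>) = of_nat n" using rep_one[OF r] unfolding mat_trace_def by simp
  have "(\<Sum>i<n. \<Sum>x\<in>K. \<rho> x $$ (i,i)) = of_nat n * e" using e by simp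
  moreover have "(\<Sum>i<n. \<Sum>x\<in>K. \<rho> x $$ (i,i)) = (\<Sum>x\<in>K. mat_trace (\<rho> x))"
    unfolding mat_trace_def using Kc rc by (subst sum.swap) (intro sum.cong; auto)
  moreover have "(\<Sum>x\<in>K. mat_trace (\<rho> x)) = of_nat (card K) * mat_trace (\<rho> g)"
  proof -
    have "(\<Sum>x\<in>K. mat_trace (\<rho> x)) = (\<Sum>x\<in>K. mat_trace (\<rho> g))"
    proof (rule sum.cong[OF refl])
      fix x assume "x \<in> K"
      then obtain y where "y \<in> carrier G" "x = y \<otimes> g \<otimes> inv y" unfolding K_def conj_class_def by auto
      thus "mat_trace (\<rho> x) = mat_trace (\<rho> g)" using rep_trace_conj[OF r g] by simp
    qed
    thus ?thesis by simp
  qed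
  ultimately have val: "of_nat (card K) * mat_trace (\<rho> g) / mat_trace (\<rho> \<one>) = e"
    unfolding tr1 using n by (simp add: field_simps)
  define w where "w = (\<lambda>y. \<rho> (inv y) $$ (0,0))"
  define M where "M = (\<lambda>x y. if x \<otimes> inv y \<in> K then 1 else (0::int))"
  have "algebraic_int e"
  proof (rule eig_alg_int[of "carrier G" \<one> w M])
    show "finite (carrier G)" by fact
    show "\<one> \<in> carrier G" by simp
    show "w \<one> \<noteq> 0" unfolding w_def using rep_one[OF r] n by simp
    fix x assume x: "x \<in> carrier G"
    have img: "(\<lambda>z. inv z \<otimes> x) ` K = {y \<in> carrier G. x \<otimes> inv y \<in> K}"
    proof
      show "(\<lambda>z. inv z \<otimes> x) ` K \<subseteq> {y \<in> carrier G. x \<otimes> inv y \<in> K}"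
      proof
        fix y assume "y \<in> (\<lambda>z. inv z \<otimes> x) ` K"
        then obtain z where z: "z \<in> K" "y = inv z \<otimes> x" by blast
        have zc: "z \<in> carrier G" using z Kc by auto
        have "x \<otimes> inv y = z" using z zc x by (simp add: inv_mult_group m_assoc[symmetric])
        thus "y \<in> {y \<in> carrier G. x \<otimes> inv y \<in> K}" using z zc x by simp
      qed
      show "{y \<in> carrier G. x \<otimes> inv y \<in> K} \<subseteq> (\<lambda>z. inv z \<otimes> x) ` K"
      proof
        fix y assume y: "y \<in> {y \<in> carrier G. x \<otimes> inv y \<in> K}"
        have "y = inv (x \<otimes> inv y) \<otimes> x" using y x by (simp add: inv_mult_group m_assoc)
        thus "y \<in> (\<lambda>z. inv z \<otimes> x) ` K" using y by blast
      qed
    qed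
    have inj: "inj_on (\<lambda>z. inv z \<otimes> x) K"
    proof (rule inj_onI)
      fix z z' assume zz: "z \<in> K" "z' \<in> K" "inv z \<otimes> x = inv z' \<otimes> x"
      hence c: "z \<in> carrier G" "z' \<in> carrier G" using Kc by auto
      hence "inv z = inv z'" using zz(3) right_cancel[of x "inv z" "inv z'"] x by simp
      thus "z = z'" using c by (metis inv_inv)
    qed
    have "(\<Sum>y\<in>carrier G. of_int (M x y) * w y) = (\<Sum>y\<in>carrier G. if x \<otimes> inv y \<in> K then w y else 0)"
      unfolding M_def by (intro sum.cong) auto
    also have "\<dots> = (\<Sum>y\<in>{y \<in> carrier G. x \<otimes> inv y \<in> K}. w y)"
      using fin by (simp add: sum.inter_filter)
    also have "\<dots> = (\<Sum>z\<in>K. w (inv z \<otimes> x))"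
      unfolding img[symmetric] by (subst sum.reindex[OF inj]) simp
    also have "\<dots> = (\<Sum>z\<in>K. \<Sum>l<n. \<rho> (inv x) $$ (0,l) * \<rho> z $$ (l,0))"
    proof (rule sum.cong[OF refl])
      fix z assume z: "z \<in> K"
      hence zc: "z \<in> carrier G" using Kc by auto
      have "w (inv z \<otimes> x) = \<rho> (inv x \<otimes> z) $$ (0,0)" unfolding w_def using zc x by (simp add: inv_mult_group)
      also have "\<dots> = (\<rho> (inv x) * \<rho> z) $$ (0,0)" using rep_mult[OF r] zc x by simp
      also have "\<dots> = (\<Sum>l<n. \<rho> (inv x) $$ (0,l) * \<rho> z $$ (l,0))"
        using mat_mult_entry[OF rc rc n n] zc x by simp
      finally show "w (inv z \<otimes> x) = (\<Sum>l<n. \<rho> (inv x) $$ (0,l) * \<rho> z $$ (l,0))" .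
    qed
    also have "\<dots> = (\<Sum>l<n. \<rho> (inv x) $$ (0,l) * (\<Sum>z\<in>K. \<rho> z $$ (l,0)))"
      by (simp add: sum_distrib_left sum.swap[of _ K])
    also have "\<dots> = (\<Sum>l<n. if l = 0 then \<rho> (inv x) $$ (0,0) * e else 0)"
      using e n by (intro sum.cong) auto
    also have "\<dots> = e * w x" using n unfolding w_def by (simp add: mult.commute)
    finally show "(\<Sum>y\<in>carrier G. of_int (M x y) * w y) = e * w x" .
  qed
  thus ?thesis using val unfolding K_def by simp
qed

end


theorem lemma2p3:
  fixes G :: "('a, 'b) monoid_scheme" and p :: nat and P :: "complex set"
    and \<chi> \<psi> :: "'a \<Rightarrow> complex"
  assumes "group G" and "finite (carrier G)" and "prime p"
    and "max_ideal_over p P"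
    and "in_principal_block G P \<chi>" and "in_principal_block G P \<psi>"
    and "\<chi> \<one>\<^bsub>G\<^esub> / of_nat p \<notin> \<int>"
    and "irr_char G (\<lambda>g. \<chi> g * \<psi> g)"
  shows "in_principal_block G P (\<lambda>g. \<chi> g * \<psi> g)"
proof -
  interpret group G by fact
  note fin = assms(2)
  have idl: "alg_int_ideal P" and pP: "of_nat p \<in> P" using assms(4) unfolding max_ideal_over_def by auto
  have Palg: "\<And>x. x \<in> P \<Longrightarrow> algebraic_int x" using idl unfolding alg_int_ideal_def by auto
  have Padd: "\<And>x y. x \<in> P \<Longrightarrow> y \<in> P \<Longrightarrow> x + y \<in> P" using idl unfolding alg_int_ideal_def by auto
  have Pmul: "\<And>r x. algebraic_int r \<Longrightarrow> x \<in> P \<Longrightarrow> r * x \<in> P" using idl unfolding alg_int_ideal_def by auto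
  obtain n1 \<rho>1 where r1: "irreducible_rep G n1 \<rho>1" "\<forall>g\<in>carrier G. \<chi> g = mat_trace (\<rho>1 g)"
    using assms(5) unfolding in_principal_block_def irr_char_def by blast
  obtain n2 \<rho>2 where r2: "irreducible_rep G n2 \<rho>2" "\<forall>g\<in>carrier G. \<psi> g = mat_trace (\<rho>2 g)"
    using assms(6) unfolding in_principal_block_def irr_char_def by blast
  obtain n3 \<rho>3 where r3: "irreducible_rep G n3 \<rho>3" "\<forall>g\<in>carrier G. \<chi> g * \<psi> g = mat_trace (\<rho>3 g)"
    using assms(8) unfolding irr_char_def by blast
  have hA: "\<forall>g\<in>carrier G. of_nat (card (conj_class G g)) * \<chi> g / \<chi> \<one>\<^bsub>G\<^esub> - of_nat (card (conj_class G g)) \<in> P"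
    using assms(5) unfolding in_principal_block_def by blast
  have hB: "\<forall>g\<in>carrier G. of_nat (card (conj_class G g)) * \<psi> g / \<psi> \<one>\<^bsub>G\<^esub> - of_nat (card (conj_class G g)) \<in> P"
    using assms(6) unfolding in_principal_block_def by blast
  have is1: "is_rep G n1 \<rho>1" and n1: "n1 > 0" using r1 unfolding irreducible_rep_def by auto
  have is2: "is_rep G n2 \<rho>2" and n2: "n2 > 0" using r2 unfolding irreducible_rep_def by auto
  have chi1: "\<chi> \<one>\<^bsub>G\<^esub> = of_nat n1" using r1(2) rep_one[OF is1] unfolding mat_trace_def by simp
  have psi1: "\<psi> \<one>\<^bsub>G\<^esub> = of_nat n2" using r2(2) rep_one[OF is2] unfolding mat_trace_def by simp
  have ndvd: "\<not> p dvd n1"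
  proof
    assume "p dvd n1"
    then obtain t where "n1 = p * t" by blast
    hence "\<chi> \<one>\<^bsub>G\<^esub> / of_nat p = of_int (int t)" using chi1 assms(3) by (simp add: prime_gt_0_nat)
    thus False using assms(7) by (metis Ints_of_int)
  qed
  have "coprime (int p) (int n1)" using prime_imp_coprime[OF assms(3) ndvd] by simp
  then obtain u v where uv: "u * int n1 + v * int p = 1"
    using bezout_int[of "int n1" "int p"] by (metis coprime_iff_gcd_eq_1 gcd.commute)
  show ?thesis
    unfolding in_principal_block_def
  proof (intro conjI ballI)
    show "irr_char G (\<lambda>g. \<chi> g * \<psi> g)" by fact
    fix g assume g: "g \<in> carrier G"
    define k where "k = card (conj_class G g)"
    define X where "X = \<chi> g"
    define Y where "Y = \<psi> g"
    define c where "c = of_nat k * (X * Y) / (of_nat n1 * of_nat n2)"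
    have ha: "of_nat k * X / of_nat n1 - of_nat k \<in> P" using hA g chi1 unfolding k_def X_def by auto
    have hb: "of_nat k * Y / of_nat n2 - of_nat k \<in> P" using hB g psi1 unfolding k_def Y_def by auto
    have Xi: "algebraic_int X" using rep_trace_alg_int[OF is1 g fin] r1(2) g unfolding X_def by simp
    have ci: "algebraic_int c"
    proof -
      have "algebraic_int (of_nat k * mat_trace (\<rho>3 g) / mat_trace (\<rho>3 \<one>\<^bsub>G\<^esub>))"
        using central_char_alg_int[OF fin r3(1) g] unfolding k_def .
      moreover have "mat_trace (\<rho>3 g) = X * Y" using r3(2) g unfolding X_def Y_def by simp
      moreover have "mat_trace (\<rho>3 \<one>\<^bsub>G\<^esub>) = of_nat n1 * of_nat n2" using r3(2) chi1 psi1 by force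
      ultimately show ?thesis unfolding c_def by simp
    qed
    define d where "d = c - of_nat k"
    have di: "algebraic_int d" unfolding d_def using algebraic_int_add[OF ci, of "- of_nat k"] by simp
    have nd: "of_nat n1 * d = X * (of_nat k * Y / of_nat n2 - of_nat k) + of_nat n1 * (of_nat k * X / of_nat n1 - of_nat k)"
      unfolding d_def c_def using n1 n2 by (simp add: field_simps)
    have ndP: "of_nat n1 * d \<in> P" unfolding nd
      by (intro Padd Pmul Xi hb ha) simp
    have "d = of_int u * (of_nat n1 * d) + d * (of_int v * of_nat p)"
    proof -
      have "(of_int (u * int n1 + v * int p) :: complex) = 1" using uv by simp
      hence "of_int u * of_nat n1 + of_int v * of_nat p = (1::complex)" by simp
      hence "d = d * (of_int u * of_nat n1 + of_int v * of_nat p)" by simp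
      thus ?thesis by (simp add: algebra_simps)
    qed
    moreover have "of_int u * (of_nat n1 * d) \<in> P" by (intro Pmul ndP) simp
    moreover have "d * (of_int v * of_nat p) \<in> P" by (intro Pmul di pP) simp
    ultimately have "d \<in> P" using Padd by metis
    thus "of_nat (card (conj_class G g)) * (\<chi> g * \<psi> g) / (\<chi> \<one>\<^bsub>G\<^esub> * \<psi> \<one>\<^bsub>G\<^esub>) - of_nat (card (conj_class G g)) \<in> P"
      unfolding d_def c_def k_def X_def Y_def chi1 psi1 .
  qed
qed

end
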